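(* Let $X$ be a pre-ordered Banach space with a closed cone, and let $X'$ be its dual, ordered by the dual cone $X'_+=\{f\in X': f(x)\ge 0 \text{ for all } x\in X_+\}$. Let $\alpha>0$. Then: (1) $X'$ is approximately $\alpha$-sum-conormal if and only if $X'$ is $\alpha$-sum-conormal; (2) $X'$ is approximately $\alpha$-max-conormal if and only if $X'$ is $\alpha$-max-conormal; (3) $X'$ is approximately $\alpha$-absolutely conormal if and only if $X'$ is $\alpha$-absolutely conormal; (4) $X'$ is approximately $\alpha$-conormal if and only if $X'$ is $\alpha$-conormal.
   Context: A cone in a real Banach space $X$ is a subset $C$ with $C+C\subseteq C$ and $\lambda C\subseteq C$ for all $\lambda\ge0$. A pre-ordered Banach space is a real Banach space $X$ together with a cone $X_+$ (not assumed proper), with $x\ge y$ meaning $x-y\in X_+$. For a pre-ordered Banach space $Z$ with closed cone and $\alpha>0$: $Z$ is $\alpha$-sum-conormal if every $x\in Z$ can be written $x=a-b$ with $a,b\in Z_+$ and $\|a\|+\|b\|\le\alpha\|x\|$; approximately $\alpha$-sum-conormal if for every $x$ and $\varepsilon>0$ there are $a,b\in Z_+$ with $x=a-b$ and $\|a\|+\|b\|<\alpha\|x\|+\varepsilon$. $Z$ is $\alpha$-max-conormal (resp. approximately) if the same holds with $\max\{\|a\|,\|b\|\}$ in place of $\|a\|+\|b\|$. $Z$ is $\alpha$-absolutely conormal if for every $x$ there is $a\in Z_+$ with $-x\le a$, $x\le a$ and $\|a\|\le\alpha\|x\|$; approximately $\alpha$-absolutely conormal if for every $x$ and $\varepsilon>0$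 there is $a\in Z_+$ with $\pm x\le a$ and $\|a\|<\alpha\|x\|+\varepsilon$. $Z$ is $\alpha$-conormal if for every $x$ there is $a\in Z_+$ with $0\le a$, $x\le a$ and $\|a\|\le\alpha\|x\|$; approximately $\alpha$-conormal if for every $x$ and $\varepsilon>0$ there is $a$ with $0\le a$, $x\le a$, $\|a\|<\alpha\|x\|+\varepsilon$. *)

theory Defs
  imports "HOL-Analysis.Analysis"
begin

text \<open>A cone in a real vector space: closed under addition and non-negative scaling
  (not assumed proper). The pre-order is x \<le> y iff y - x \<in> K.\<close>
definition is_cone :: "'a::real_vector set \<Rightarrow> bool" where
  "is_cone C \<longleftrightarrow> (\<forall>x\<in>C. \<forall>y\<in>C. x + y \<in> C) \<and> (\<forall>l::real. l \<ge> 0 \<longrightarrow> (\<forall>x\<in>C. l *\<^sub>R x \<in> C))"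

definition dual_cone :: "'a::real_normed_vector set \<Rightarrow> ('a \<Rightarrow>\<^sub>L real) set" where
  "dual_cone C = {f. \<forall>x\<in>C. blinfun_apply f x \<ge> 0}"

definition sum_conormal :: "'b::real_normed_vector set \<Rightarrow> real \<Rightarrow> bool" where
  "sum_conormal K \<alpha> \<longleftrightarrow> (\<forall>x. \<exists>a\<in>K. \<exists>b\<in>K. x = a - b \<and> norm a + norm b \<le> \<alpha> * norm x)"

definition approx_sum_conormal :: "'b::real_normed_vector set \<Rightarrow> real \<Rightarrow> bool" where
  "approx_sum_conormal K \<alpha> \<longleftrightarrow>
     (\<forall>x. \<forall>\<epsilon>>0. \<exists>a\<in>K. \<exists>b\<in>K. x = a - b \<and> norm a + norm b < \<alpha> * norm x + \<epsilon>)"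

definition max_conormal :: "'b::real_normed_vector set \<Rightarrow> real \<Rightarrow> bool" where
  "max_conormal K \<alpha> \<longleftrightarrow> (\<forall>x. \<exists>a\<in>K. \<exists>b\<in>K. x = a - b \<and> max (norm a) (norm b) \<le> \<alpha> * norm x)"

definition approx_max_conormal :: "'b::real_normed_vector set \<Rightarrow> real \<Rightarrow> bool" where
  "approx_max_conormal K \<alpha> \<longleftrightarrow>
     (\<forall>x. \<forall>\<epsilon>>0. \<exists>a\<in>K. \<exists>b\<in>K. x = a - b \<and> max (norm a) (norm b) < \<alpha> * norm x + \<epsilon>)"

text \<open>-x \<le> a and x \<le> a, i.e. a - (-x) \<in> K and a - x \<in> K.\<close>
definition abs_conormal :: "'b::real_normed_vector set \<Rightarrow> real \<Rightarrow> bool" where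
  "abs_conormal K \<alpha> \<longleftrightarrow> (\<forall>x. \<exists>a\<in>K. a - (- x) \<in> K \<and> a - x \<in> K \<and> norm a \<le> \<alpha> * norm x)"

definition approx_abs_conormal :: "'b::real_normed_vector set \<Rightarrow> real \<Rightarrow> bool" where
  "approx_abs_conormal K \<alpha> \<longleftrightarrow>
     (\<forall>x. \<forall>\<epsilon>>0. \<exists>a\<in>K. a - (- x) \<in> K \<and> a - x \<in> K \<and> norm a < \<alpha> * norm x + \<epsilon>)"

text \<open>0 \<le> a and x \<le> a.\<close>
definition conormal :: "'b::real_normed_vector set \<Rightarrow> real \<Rightarrow> bool" where
  "conormal K \<alpha> \<longleftrightarrow> (\<forall>x. \<exists>a. a - 0 \<in> K \<and> a - x \<in> K \<and> norm a \<le> \<alpha> * norm x)"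

definition approx_conormal :: "'b::real_normed_vector set \<Rightarrow> real \<Rightarrow> bool" where
  "approx_conormal K \<alpha> \<longleftrightarrow>
     (\<forall>x. \<forall>\<epsilon>>0. \<exists>a. a - 0 \<in> K \<and> a - x \<in> K \<and> norm a < \<alpha> * norm x + \<epsilon>)"

end

theory Submission imports Defs begin

lemma closed_ball_forall:
  "(\<And>i. i\<in>A \<Longrightarrow> closed {x. Q i x}) \<Longrightarrow> closed {x. \<forall>i\<in>A. Q i x}"
proof -
  assume h: "\<And>i. i\<in>A \<Longrightarrow> closed {x. Q i x}"
  have "{x. \<forall>i\<in>A. Q i x} = (\<Inter>i\<in>A. {x. Q i x})" by auto
  then show ?thesis using h by (simp add: closed_INT)
qed

lemma dual_extract:
  fixes P :: "nat \<Rightarrow> ('a::real_normed_vector \<Rightarrow> real) \<Rightarrow> bool"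
  assumes ex: "\<And>n. \<exists>a::'a \<Rightarrow>\<^sub>L real. norm a \<le> R \<and> P n (blinfun_apply a)"
  and cl: "\<And>n. closed {g. P n g}"
  and dec: "\<And>n g. P (Suc n) g \<Longrightarrow> P n g"
  shows "\<exists>a::'a \<Rightarrow>\<^sub>L real. norm a \<le> R \<and> (\<forall>n. P n (blinfun_apply a))"
proof -
  define S where "S = Pi UNIV (\<lambda>y::'a. {-R*norm y..R*norm y})"
  define L where "L = {g::'a\<Rightarrow>real. (\<forall>u v. g(u+v) = g u + g v) \<and> (\<forall>r u. g(r *\<^sub>R u) = r * g u)}"
  have "compactin (product_topology (\<lambda>i. euclidean) UNIV) (PiE UNIV (\<lambda>y::'a. {-R*norm y..R*norm y}))"
    by (simp add: compactin_PiE)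
  then have cS: "compact S"
    unfolding S_def by (simp add: euclidean_product_topology PiE_UNIV_domain)
  have clL: "closed L"
    unfolding L_def
    by (intro closed_Collect_conj closed_Collect_all closed_Collect_eq continuous_intros
          continuous_on_product_coordinates)
  have P_mono: "P m g" if "m \<le> n" "P n g" for m n g
    using that
  proof (induction n rule: dec_induct)
    case base then show ?case by simp
  next
    case (step k) then show ?case using dec by blast
  qed
  have "S \<inter> (\<Inter>n\<in>UNIV. L \<inter> {g. P n g}) \<noteq> {}"
  proof (rule compact_imp_fip_image[OF cS])
    show "closed (L \<inter> {g. P n g})" for n using clL cl by blast
  next
    fix I' :: "nat set" assume "finite I'"
    define N where "N = Max (insert 0 I')"
    have NI: "n \<le> N" if "n \<in> I'" for n using \<open>finite I'\<close> that unfolding N_def by simp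
    obtain a :: "'a \<Rightarrow>\<^sub>L real" where a: "norm a \<le> R" "P N (blinfun_apply a)" using ex by blast
    have "blinfun_apply a \<in> S"
      unfolding S_def
    proof (clarsimp)
      fix y
      have "\<bar>blinfun_apply a y\<bar> \<le> norm a * norm y" using norm_blinfun[of a y] by simp
      also have "\<dots> \<le> R * norm y" using a(1) by (simp add: mult_right_mono)
      finally show "- (R * norm y) \<le> blinfun_apply a y \<and> blinfun_apply a y \<le> R * norm y" by linarith
    qed
    moreover have "blinfun_apply a \<in> L"
      unfolding L_def by (simp add: blinfun.add_right blinfun.scaleR_right)
    moreover have "P n (blinfun_apply a)" if "n \<in> I'" for n using P_mono[OF NI[OF that] a(2)] .
    ultimately show "S \<inter> (\<Inter>n\<in>I'. L \<inter> {g. P n g}) \<noteq> {}" by blast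
  qed
  then obtain g where g: "g \<in> S" "g \<in> L" "\<And>n. P n g" by blast
  have R0: "0 \<le> R" using ex[of 0] norm_ge_zero order_trans by blast
  have gb: "norm (g y) \<le> R * norm y" for y using g(1) unfolding S_def Pi_iff by (simp add: abs_le_iff) (meson UNIV_I atLeastAtMost_iff minus_le_iff)
  have bl: "bounded_linear g"
  proof (rule bounded_linear_intro[where K=R])
    show "g (x + y) = g x + g y" for x y using g(2) unfolding L_def by blast
    show "g (r *\<^sub>R x) = r *\<^sub>R g x" for r x using g(2) unfolding L_def by simp
    show "norm (g x) \<le> norm x * R" for x using gb[of x] by (simp add: mult.commute)
  qed
  show ?thesis
  proof (intro exI conjI allI)
    show "norm (Blinfun g) \<le> R"
      by (rule norm_blinfun_bound[OF R0]) (metis bounded_linear_Blinfun_apply[OF bl] gb)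
    show "P n (blinfun_apply (Blinfun g))" for n
      by (simp add: bounded_linear_Blinfun_apply[OF bl] g(3))
  qed
qed

lemma app_le_norm:
  fixes f :: "'a::real_normed_vector \<Rightarrow>\<^sub>L real"
  assumes "norm y \<le> 1" shows "blinfun_apply f y \<le> norm f"
proof -
  have "blinfun_apply f y \<le> norm f * norm y" using norm_blinfun[of f y] by simp
  also have "\<dots> \<le> norm f" using assms mult_left_le[of "norm y" "norm f"] by simp
  finally show ?thesis .
qed

lemma norm_le_from_sup:
  fixes f :: "'a::real_normed_vector \<Rightarrow>\<^sub>L real"
  assumes h: "\<And>y. norm y \<le> 1 \<Longrightarrow> blinfun_apply f y \<le> s"
  shows "norm f \<le> s"
proof -
  have s0: "0 \<le> s" using h[of 0] by (simp add: blinfun.zero_right)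
  have "norm (blinfun_apply f y) \<le> s * norm y" for y
  proof (cases "y = 0")
    case True then show ?thesis by (simp add: blinfun.zero_right)
  next
    case False
    let ?u = "(1 / norm y) *\<^sub>R y"
    have nu: "norm ?u \<le> 1" "norm (- ?u) \<le> 1" using False by auto
    have e: "blinfun_apply f ?u = blinfun_apply f y / norm y"
      by (simp add: blinfun.scaleR_right)
    have e2: "blinfun_apply f (- ?u) = - blinfun_apply f y / norm y"
      by (simp add: blinfun.scaleR_right blinfun.minus_right)
    have "blinfun_apply f y / norm y \<le> s" "- blinfun_apply f y / norm y \<le> s"
      using h[OF nu(1)] h[OF nu(2)] e e2 by auto
    moreover have np: "norm y > 0" using False by simp
    ultimately have "blinfun_apply f y \<le> s * norm y" "- blinfun_apply f y \<le> s * norm y"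
      using pos_divide_le_eq[OF np, of "blinfun_apply f y" s]
        pos_divide_le_eq[OF np, of "- blinfun_apply f y" s] by auto
    then show ?thesis by simp
  qed
  then show ?thesis by (rule norm_blinfun_bound[OF s0])
qed

lemma le_eps:
  fixes t s :: real
  assumes "\<And>n::nat. t \<le> s + 1 / (real n + 1)"
  shows "t \<le> s"
proof (rule ccontr)
  assume "\<not> t \<le> s"
  then have "t - s > 0" by simp
  then obtain n where "inverse (real (Suc n)) < t - s" using reals_Archimedean by blast
  with assms[of n] show False by (simp add: inverse_eq_divide add.commute)
qed

lemma cn_le: "1 / (real n + 1) \<le> (1::real)" by simp
lemma cn_pos: "0 < 1 / (real n + 1)" by simp
lemma cn_dec: "1 / (real (Suc n) + 1) \<le> 1 / (real n + 1)" by (simp add: frac_le)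

lemma clo_coord_le:
  "closed {g::'a \<Rightarrow> real. (\<Sum>i\<in>I. g (y i)) \<le> c}"
  by (intro closed_Collect_le continuous_intros continuous_on_product_coordinates)

lemma sum_case:
  fixes C :: "'a::real_normed_vector set"
  shows "approx_sum_conormal (dual_cone C) \<alpha> \<longleftrightarrow> sum_conormal (dual_cone C) \<alpha>"
proof
  assume "sum_conormal (dual_cone C) \<alpha>"
  then show "approx_sum_conormal (dual_cone C) \<alpha>"
    unfolding sum_conormal_def approx_sum_conormal_def
    by (meson less_add_same_cancel1 order_le_less_trans)
next
  assume A: "approx_sum_conormal (dual_cone C) \<alpha>"
  show "sum_conormal (dual_cone C) \<alpha>" unfolding sum_conormal_def
  proof
    fix x :: "'a \<Rightarrow>\<^sub>L real"
    define c where "c n = \<alpha> * norm x + 1/(real n + 1)" for n::nat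
    define P where "P n g \<longleftrightarrow> (\<forall>d\<in>C. 0 \<le> g d) \<and> (\<forall>d\<in>C. 0 \<le> g d - blinfun_apply x d) \<and>
      (\<forall>y\<in>{y. norm y \<le> 1}. \<forall>z\<in>{z. norm z \<le> 1}. g y + (g z - blinfun_apply x z) \<le> c n)"
      for n g
    have ex: "\<exists>a. norm a \<le> \<alpha>*norm x + 1 \<and> P n (blinfun_apply a)" for n
    proof -
      obtain a b where ab: "a \<in> dual_cone C" "b \<in> dual_cone C" "x = a - b" "norm a + norm b < c n"
        using A[unfolded approx_sum_conormal_def, rule_format, OF cn_pos[of n]] unfolding c_def by blast
      have bx: "blinfun_apply a d - blinfun_apply x d = blinfun_apply b d" for d
        using ab(3) by (simp add: blinfun.diff_left)
      have "norm a \<le> \<alpha>*norm x + 1" using ab(4) cn_le[of n] norm_ge_zero[of b] unfolding c_def by linarith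
      moreover have "P n (blinfun_apply a)"
        unfolding P_def bx
      proof (intro conjI ballI)
        show "0 \<le> blinfun_apply a d" if "d \<in> C" for d using ab(1) that by (simp add: dual_cone_def)
        show "0 \<le> blinfun_apply b d" if "d \<in> C" for d using ab(2) that by (simp add: dual_cone_def)
        show "blinfun_apply a y + blinfun_apply b z \<le> c n" if "y \<in> {y. norm y \<le> 1}" "z \<in> {z. norm z \<le> 1}" for y z
          using app_le_norm[of y a] app_le_norm[of z b] that ab(4) by auto
      qed
      ultimately show ?thesis by blast
    qed
    have cl: "closed {g. P n g}" for n
      unfolding P_def
      by (intro closed_Collect_conj closed_ball_forall closed_Collect_le continuous_intros continuous_on_product_coordinates)
    have dec: "P n g" if "P (Suc n) g" for n g
    proof -
      have "c (Suc n) \<le> c n" unfolding c_def using cn_dec[of n] by simp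
      then show ?thesis using that unfolding P_def by (meson order_trans)
    qed
    obtain a where a: "norm a \<le> \<alpha>*norm x + 1" "\<And>n. P n (blinfun_apply a)"
      using dual_extract[of "\<alpha>*norm x + 1" P, OF ex cl dec] by blast
    define b where "b = a - x"
    have bx: "blinfun_apply b d = blinfun_apply a d - blinfun_apply x d" for d
      unfolding b_def by (simp add: blinfun.diff_left)
    have aK: "a \<in> dual_cone C" using a(2)[of 0] unfolding P_def dual_cone_def by auto
    have bK: "b \<in> dual_cone C" using a(2)[of 0] by (auto simp: P_def dual_cone_def bx)
    have "norm a + norm b \<le> c n" for n
    proof -
      have "blinfun_apply b z \<le> c n - norm a" if z: "norm z \<le> 1" for z
      proof -
        have "norm a \<le> c n - blinfun_apply b z"
        proof (rule norm_le_from_sup)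
          fix y :: 'a assume "norm y \<le> 1"
          then have "blinfun_apply a y + (blinfun_apply a z - blinfun_apply x z) \<le> c n"
          proof -
            have "\<forall>y\<in>{y. norm y \<le> 1}. \<forall>z\<in>{z. norm z \<le> 1}. blinfun_apply a y + (blinfun_apply a z - blinfun_apply x z) \<le> c n"
              using a(2)[of n] unfolding P_def by (rule conjunct2[OF conjunct2])
            then show ?thesis using \<open>norm y \<le> 1\<close> z by simp
          qed
          then show "blinfun_apply a y \<le> c n - blinfun_apply b z" by (simp add: bx)
        qed
        then show ?thesis by linarith
      qed
      then have "norm b \<le> c n - norm a" by (rule norm_le_from_sup)
      then show ?thesis by linarith
    qed
    then have "norm a + norm b \<le> \<alpha> * norm x" unfolding c_def by (rule le_eps)
    moreover have "x = a - b" unfolding b_def by simp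
    ultimately show "\<exists>a\<in>dual_cone C. \<exists>b\<in>dual_cone C. x = a - b \<and> norm a + norm b \<le> \<alpha> * norm x"
      using aK bK by blast
  qed
qed

lemma max_case:
  fixes C :: "'a::real_normed_vector set"
  shows "approx_max_conormal (dual_cone C) \<alpha> \<longleftrightarrow> max_conormal (dual_cone C) \<alpha>"
proof
  assume "max_conormal (dual_cone C) \<alpha>"
  then show "approx_max_conormal (dual_cone C) \<alpha>"
    unfolding max_conormal_def approx_max_conormal_def
    by (meson less_add_same_cancel1 order_le_less_trans)
next
  assume A: "approx_max_conormal (dual_cone C) \<alpha>"
  show "max_conormal (dual_cone C) \<alpha>" unfolding max_conormal_def
  proof
    fix x :: "'a \<Rightarrow>\<^sub>L real"
    define c where "c n = \<alpha> * norm x + 1/(real n + 1)" for n::nat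
    define P where "P n g \<longleftrightarrow> (\<forall>d\<in>C. 0 \<le> g d) \<and> (\<forall>d\<in>C. 0 \<le> g d - blinfun_apply x d) \<and>
      (\<forall>y\<in>{y. norm y \<le> 1}. g y \<le> c n \<and> g y - blinfun_apply x y \<le> c n)"
      for n g
    have ex: "\<exists>a. norm a \<le> \<alpha>*norm x + 1 \<and> P n (blinfun_apply a)" for n
    proof -
      obtain a b where ab: "a \<in> dual_cone C" "b \<in> dual_cone C" "x = a - b" "max (norm a) (norm b) < c n"
        using A[unfolded approx_max_conormal_def, rule_format, OF cn_pos[of n]] unfolding c_def by blast
      have bx: "blinfun_apply a d - blinfun_apply x d = blinfun_apply b d" for d
        using ab(3) by (simp add: blinfun.diff_left)
      have "norm a \<le> \<alpha>*norm x + 1" using ab(4) cn_le[of n] unfolding c_def by linarith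
      moreover have "P n (blinfun_apply a)"
        unfolding P_def bx
      proof (intro conjI ballI)
        show "0 \<le> blinfun_apply a d" if "d \<in> C" for d using ab(1) that by (simp add: dual_cone_def)
        show "0 \<le> blinfun_apply b d" if "d \<in> C" for d using ab(2) that by (simp add: dual_cone_def)
        show "blinfun_apply a y \<le> c n" if "y \<in> {y. norm y \<le> 1}" for y
          using app_le_norm[of y a] that ab(4) by auto
        show "blinfun_apply b y \<le> c n" if "y \<in> {y. norm y \<le> 1}" for y
          using app_le_norm[of y b] that ab(4) by auto
      qed
      ultimately show ?thesis by blast
    qed
    have cl: "closed {g. P n g}" for n
      unfolding P_def
      by (intro closed_Collect_conj closed_ball_forall closed_Collect_le continuous_intros continuous_on_product_coordinates)
    have dec: "P n g" if "P (Suc n) g" for n g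
    proof -
      have "c (Suc n) \<le> c n" unfolding c_def using cn_dec[of n] by simp
      then show ?thesis using that unfolding P_def by (meson order_trans)
    qed
    obtain a where a: "norm a \<le> \<alpha>*norm x + 1" "\<And>n. P n (blinfun_apply a)"
      using dual_extract[of "\<alpha>*norm x + 1" P, OF ex cl dec] by blast
    define b where "b = a - x"
    have bx: "blinfun_apply b d = blinfun_apply a d - blinfun_apply x d" for d
      unfolding b_def by (simp add: blinfun.diff_left)
    have aK: "a \<in> dual_cone C" using a(2)[of 0] unfolding P_def dual_cone_def by auto
    have bK: "b \<in> dual_cone C" using a(2)[of 0] by (auto simp: P_def dual_cone_def bx)
    have "max (norm a) (norm b) \<le> c n" for n
    proof -
      have h: "\<forall>y\<in>{y. norm y \<le> 1}. blinfun_apply a y \<le> c n \<and> blinfun_apply a y - blinfun_apply x y \<le> c n"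
        using a(2)[of n] unfolding P_def by (rule conjunct2[OF conjunct2])
      have "norm a \<le> c n" by (rule norm_le_from_sup) (use h in simp)
      moreover have "norm b \<le> c n" by (rule norm_le_from_sup) (use h in \<open>simp add: bx\<close>)
      ultimately show ?thesis by simp
    qed
    then have "max (norm a) (norm b) \<le> \<alpha> * norm x" unfolding c_def by (rule le_eps)
    moreover have "x = a - b" unfolding b_def by simp
    ultimately show "\<exists>a\<in>dual_cone C. \<exists>b\<in>dual_cone C. x = a - b \<and> max (norm a) (norm b) \<le> \<alpha> * norm x"
      using aK bK by blast
  qed
qed

lemma abs_case:
  fixes C :: "'a::real_normed_vector set"
  shows "approx_abs_conormal (dual_cone C) \<alpha> \<longleftrightarrow> abs_conormal (dual_cone C) \<alpha>"
proof
  assume "abs_conormal (dual_cone C) \<alpha>"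
  then show "approx_abs_conormal (dual_cone C) \<alpha>"
    unfolding abs_conormal_def approx_abs_conormal_def
    by (meson less_add_same_cancel1 order_le_less_trans)
next
  assume A: "approx_abs_conormal (dual_cone C) \<alpha>"
  show "abs_conormal (dual_cone C) \<alpha>" unfolding abs_conormal_def
  proof
    fix x :: "'a \<Rightarrow>\<^sub>L real"
    define c where "c n = \<alpha> * norm x + 1/(real n + 1)" for n::nat
    define P where "P n g \<longleftrightarrow> (\<forall>d\<in>C. 0 \<le> g d) \<and> (\<forall>d\<in>C. 0 \<le> g d + blinfun_apply x d) \<and>
      (\<forall>d\<in>C. 0 \<le> g d - blinfun_apply x d) \<and> (\<forall>y\<in>{y. norm y \<le> 1}. g y \<le> c n)"
      for n g
    have ex: "\<exists>a. norm a \<le> \<alpha>*norm x + 1 \<and> P n (blinfun_apply a)" for n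
    proof -
      obtain a where ab: "a \<in> dual_cone C" "a - (- x) \<in> dual_cone C" "a - x \<in> dual_cone C" "norm a < c n"
        using A[unfolded approx_abs_conormal_def, rule_format, OF cn_pos[of n]] unfolding c_def by blast
      have "norm a \<le> \<alpha>*norm x + 1" using ab(4) cn_le[of n] unfolding c_def by linarith
      moreover have "P n (blinfun_apply a)"
        unfolding P_def
      proof (intro conjI ballI)
        show "0 \<le> blinfun_apply a d" if "d \<in> C" for d using ab(1) that by (simp add: dual_cone_def)
        show "0 \<le> blinfun_apply a d + blinfun_apply x d" if "d \<in> C" for d
          using ab(2) that by (simp add: dual_cone_def blinfun.diff_left blinfun.minus_left blinfun.add_left)
        show "0 \<le> blinfun_apply a d - blinfun_apply x d" if "d \<in> C" for d
          using ab(3) that by (simp add: dual_cone_def blinfun.diff_left)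
        show "blinfun_apply a y \<le> c n" if "y \<in> {y. norm y \<le> 1}" for y
          using app_le_norm[of y a] that ab(4) by auto
      qed
      ultimately show ?thesis by blast
    qed
    have cl: "closed {g. P n g}" for n
      unfolding P_def
      by (intro closed_Collect_conj closed_ball_forall closed_Collect_le continuous_intros continuous_on_product_coordinates)
    have dec: "P n g" if "P (Suc n) g" for n g
    proof -
      have "c (Suc n) \<le> c n" unfolding c_def using cn_dec[of n] by simp
      then show ?thesis using that unfolding P_def by (meson order_trans)
    qed
    obtain a where a: "norm a \<le> \<alpha>*norm x + 1" "\<And>n. P n (blinfun_apply a)"
      using dual_extract[of "\<alpha>*norm x + 1" P, OF ex cl dec] by blast
    have aK: "a \<in> dual_cone C" using a(2)[of 0] unfolding P_def dual_cone_def by auto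
    have bK: "a - (- x) \<in> dual_cone C" using a(2)[of 0]
      by (auto simp: P_def dual_cone_def blinfun.diff_left blinfun.minus_left blinfun.add_left)
    have cK: "a - x \<in> dual_cone C" using a(2)[of 0]
      by (auto simp: P_def dual_cone_def blinfun.diff_left)
    have "norm a \<le> c n" for n
    proof -
      have h: "\<forall>y\<in>{y. norm y \<le> 1}. blinfun_apply a y \<le> c n"
        using a(2)[of n] unfolding P_def by (rule conjunct2[OF conjunct2[OF conjunct2]])
      show "norm a \<le> c n" by (rule norm_le_from_sup) (use h in simp)
    qed
    then have "norm a \<le> \<alpha> * norm x" unfolding c_def by (rule le_eps)
    then show "\<exists>a\<in>dual_cone C. a - (- x) \<in> dual_cone C \<and> a - x \<in> dual_cone C \<and> norm a \<le> \<alpha> * norm x"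
      using aK bK cK by blast
  qed
qed

lemma co_case:
  fixes C :: "'a::real_normed_vector set"
  shows "approx_conormal (dual_cone C) \<alpha> \<longleftrightarrow> conormal (dual_cone C) \<alpha>"
proof
  assume "conormal (dual_cone C) \<alpha>"
  then show "approx_conormal (dual_cone C) \<alpha>"
    unfolding conormal_def approx_conormal_def
    by (meson less_add_same_cancel1 order_le_less_trans)
next
  assume A: "approx_conormal (dual_cone C) \<alpha>"
  show "conormal (dual_cone C) \<alpha>" unfolding conormal_def
  proof
    fix x :: "'a \<Rightarrow>\<^sub>L real"
    define c where "c n = \<alpha> * norm x + 1/(real n + 1)" for n::nat
    define P where "P n g \<longleftrightarrow> (\<forall>d\<in>C. 0 \<le> g d) \<and>
      (\<forall>d\<in>C. 0 \<le> g d - blinfun_apply x d) \<and> (\<forall>y\<in>{y. norm y \<le> 1}. g y \<le> c n)"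
      for n g
    have ex: "\<exists>a. norm a \<le> \<alpha>*norm x + 1 \<and> P n (blinfun_apply a)" for n
    proof -
      obtain a where ab: "a - 0 \<in> dual_cone C" "a - x \<in> dual_cone C" "norm a < c n"
        using A[unfolded approx_conormal_def, rule_format, OF cn_pos[of n]] unfolding c_def by blast
      have "norm a \<le> \<alpha>*norm x + 1" using ab(3) cn_le[of n] unfolding c_def by linarith
      moreover have "P n (blinfun_apply a)"
        unfolding P_def
      proof (intro conjI ballI)
        show "0 \<le> blinfun_apply a d" if "d \<in> C" for d using ab(1) that by (simp add: dual_cone_def)
        show "0 \<le> blinfun_apply a d - blinfun_apply x d" if "d \<in> C" for d
          using ab(2) that by (simp add: dual_cone_def blinfun.diff_left)
        show "blinfun_apply a y \<le> c n" if "y \<in> {y. norm y \<le> 1}" for y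
          using app_le_norm[of y a] that ab(3) by auto
      qed
      ultimately show ?thesis by blast
    qed
    have cl: "closed {g. P n g}" for n
      unfolding P_def
      by (intro closed_Collect_conj closed_ball_forall closed_Collect_le continuous_intros continuous_on_product_coordinates)
    have dec: "P n g" if "P (Suc n) g" for n g
    proof -
      have "c (Suc n) \<le> c n" unfolding c_def using cn_dec[of n] by simp
      then show ?thesis using that unfolding P_def by (meson order_trans)
    qed
    obtain a where a: "norm a \<le> \<alpha>*norm x + 1" "\<And>n. P n (blinfun_apply a)"
      using dual_extract[of "\<alpha>*norm x + 1" P, OF ex cl dec] by blast
    have aK: "a - 0 \<in> dual_cone C" using a(2)[of 0] unfolding P_def dual_cone_def by auto
    have cK: "a - x \<in> dual_cone C" using a(2)[of 0]
      by (auto simp: P_def dual_cone_def blinfun.diff_left)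
    have "norm a \<le> c n" for n
    proof -
      have h: "\<forall>y\<in>{y. norm y \<le> 1}. blinfun_apply a y \<le> c n"
        using a(2)[of n] unfolding P_def by (rule conjunct2[OF conjunct2])
      show "norm a \<le> c n" by (rule norm_le_from_sup) (use h in simp)
    qed
    then have "norm a \<le> \<alpha> * norm x" unfolding c_def by (rule le_eps)
    then show "\<exists>a. a - 0 \<in> dual_cone C \<and> a - x \<in> dual_cone C \<and> norm a \<le> \<alpha> * norm x"
      using aK cK by blast
  qed
qed

theorem lemma3p8:
  fixes C :: "'a::banach set" and \<alpha> :: real
  assumes "is_cone C" and "closed C" and "\<alpha> > 0"
  shows "(approx_sum_conormal (dual_cone C) \<alpha> \<longleftrightarrow> sum_conormal (dual_cone C) \<alpha>)
       \<and> (approx_max_conormal (dual_cone C) \<alpha> \<longleftrightarrow> max_conormal (dual_cone C) \<alpha>)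
       \<and> (approx_abs_conormal (dual_cone C) \<alpha> \<longleftrightarrow> abs_conormal (dual_cone C) \<alpha>)
       \<and> (approx_conormal (dual_cone C) \<alpha> \<longleftrightarrow> conormal (dual_cone C) \<alpha>)"
  using sum_case max_case abs_case co_case by blast

end
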